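(* Let $p$ be a prime with $p\equiv 1\pmod{12}$. There exist $x,y\in\mathbb{F}_p$ with $x^4+6x^2-3=0$ and $y^2=x^3-x$ if and only if there exists $y\in\mathbb{F}_p$ with $y^8+360y^4-48=0$. *)

theory Defs
  imports "HOL-Number_Theory.Number_Theory"
begin

end

theory Submission
  imports Defs
begin

lemma no13: "\<not> (13::int) dvd (y::int)^4 - 28"
proof
  assume "(13::int) dvd y^4 - 28"
  hence "[y^4 = 28] (mod 13)" by (simp add: cong_iff_dvd_diff cong_sym_eq)
  moreover have "[y^4 = (y mod 13)^4] (mod 13)"
    by (intro cong_pow) (simp add: cong_def)
  ultimately have "[(y mod 13)^4 = 28] (mod 13)" by (meson cong_sym cong_trans)
  hence "(y mod 13)^4 mod 13 = 2" by (simp add: cong_def)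
  moreover have "y mod 13 = 0 \<or> y mod 13 = 1 \<or> y mod 13 = 2 \<or> y mod 13 = 3 \<or> y mod 13 = 4 \<or> y mod 13 = 5 \<or> y mod 13 = 6 \<or> y mod 13 = 7 \<or> y mod 13 = 8 \<or> y mod 13 = 9 \<or> y mod 13 = 10 \<or> y mod 13 = 11 \<or> y mod 13 = 12"
    by (smt (verit) pos_mod_bound pos_mod_sign)
  ultimately show False by (elim disjE) simp_all
qed

theorem lemma1:
  fixes p :: nat
  assumes "prime p" and "[p = 1] (mod 12)"
  shows "(\<exists>x y :: int. [x^4 + 6*x^2 - 3 = 0] (mod int p) \<and> [y^2 = x^3 - x] (mod int p))
     \<longleftrightarrow> (\<exists>y :: int. [y^8 + 360*y^4 - 48 = 0] (mod int p))"
proof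
  assume "\<exists>x y :: int. [x^4 + 6*x^2 - 3 = 0] (mod int p) \<and> [y^2 = x^3 - x] (mod int p)"
  then obtain x y :: int where hx: "[x^4 + 6*x^2 - 3 = 0] (mod int p)" and hy: "[y^2 = x^3 - x] (mod int p)" by blast
  have "[(y^2)^4 + 360*(y^2)^2 - 48 = (x^3-x)^4 + 360*(x^3-x)^2 - 48] (mod int p)"
    by (intro cong_add cong_diff cong_mult cong_pow cong_refl hy)
  also have "(x^3-x)^4 + 360*(x^3-x)^2 - 48 = (x^8-10*x^6+69*x^4-88*x^2+16)*(x^4 + 6*x^2 - 3)"
    by (simp add: algebra_simps power_numeral_reduce)
  also have "[\<dots> = (x^8-10*x^6+69*x^4-88*x^2+16)*0] (mod int p)"
    by (intro cong_mult cong_refl hx)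
  finally show "\<exists>y :: int. [y^8 + 360*y^4 - 48 = 0] (mod int p)"
    by (intro exI[of _ y]) (simp add: power_mult[symmetric])
next
  assume "\<exists>y :: int. [y^8 + 360*y^4 - 48 = 0] (mod int p)"
  then obtain y :: int where hy: "[y^8 + 360*y^4 - 48 = 0] (mod int p)" by blast
  define d where "d = y^4 - 28"
  have pr: "prime (int p)" using assms(1) by simp
  have p12: "p mod 12 = 1" using assms(2) by (simp add: cong_def)
  have p2: "p \<noteq> 2" using assms(2) by (auto simp: cong_def)
  have nd: "\<not> int p dvd d"
  proof
    assume h: "int p dvd d"
    have "int p dvd y^8 + 360*y^4 - 48" using hy by (simp add: cong_0_iff)
    hence "int p dvd (y^8 + 360*y^4 - 48) - (y^4 + 388) * d" using h by (metis dvd_diff dvd_mult)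
    moreover have "(y^8 + 360*y^4 - 48) - (y^4 + 388) * d = 2^6 * 13^2"
      unfolding d_def by (simp add: algebra_simps power_numeral_reduce)
    ultimately have "int p dvd 2^6 * 13^2" by simp
    hence "int p dvd 2 \<or> int p dvd 13" using pr
      by (metis prime_dvd_mult_iff prime_dvd_power)
    moreover have "int p dvd 2 \<Longrightarrow> False"
    proof -
      assume "int p dvd 2"
      hence "p dvd 2" by presburger
      hence "p \<le> 2" by (simp add: dvd_imp_le)
      thus False using p12 prime_ge_2_nat[OF assms(1)] by simp
    qed
    moreover have "int p dvd 13 \<Longrightarrow> False"
    proof -
      assume "int p dvd 13"
      hence "p dvd 13" by presburger
      hence "p \<le> 13" by (simp add: dvd_imp_le)
      hence "p = 13" using p12 prime_ge_2_nat[OF assms(1)] by presburger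
      thus False using h no13 unfolding d_def by simp
    qed
    ultimately show False by blast
  qed
  have "coprime d (int p)" using pr nd
    by (metis coprime_commute prime_imp_coprime)
  then obtain u where hu: "[d * u = 1] (mod int p)"
    by (metis cong_solve_coprime_int)
  define x where "x = 52 * y^2 * u"
  have hdx: "[d * x = 52 * y^2] (mod int p)"
  proof -
    have "d * x = (d*u) * (52*y^2)" unfolding x_def by (simp add: algebra_simps)
    also have "[\<dots> = 1 * (52*y^2)] (mod int p)" by (intro cong_mult cong_refl hu)
    finally show ?thesis by simp
  qed
  have "[(d*x)^4 + 6*d^2*(d*x)^2 - 3*d^4 = (52*y^2)^4 + 6*d^2*(52*y^2)^2 - 3*d^4] (mod int p)"
    by (intro cong_add cong_diff cong_mult cong_pow cong_refl hdx)
  also have "(52*y^2)^4 + 6*d^2*(52*y^2)^2 - 3*d^4 = (38416 + 17640*y^4 - 3*y^8)*(y^8 + 360*y^4 - 48)"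
    unfolding d_def by (simp add: algebra_simps power_numeral_reduce)
  also have "[\<dots> = (38416 + 17640*y^4 - 3*y^8)*0] (mod int p)"
    by (intro cong_mult cong_refl hy)
  finally have "int p dvd d^4 * (x^4 + 6*x^2 - 3)"
    by (simp add: cong_0_iff algebra_simps power_numeral_reduce)
  hence X: "int p dvd x^4 + 6*x^2 - 3" using pr nd
    by (metis prime_dvd_mult_iff prime_dvd_power)
  have "[(d*x)^3 - d^2*(d*x) - d^3*y^2 = (52*y^2)^3 - d^2*(52*y^2) - d^3*y^2] (mod int p)"
    by (intro cong_add cong_diff cong_mult cong_pow cong_refl hdx)
  also have "(52*y^2)^3 - d^2*(52*y^2) - d^3*y^2 = (392*y^2 - y^6)*(y^8 + 360*y^4 - 48)"
    unfolding d_def by (simp add: algebra_simps power_numeral_reduce)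
  also have "[\<dots> = (392*y^2 - y^6)*0] (mod int p)"
    by (intro cong_mult cong_refl hy)
  finally have "int p dvd d^3 * (x^3 - x - y^2)"
    by (simp add: cong_0_iff algebra_simps power_numeral_reduce)
  hence Y: "int p dvd x^3 - x - y^2" using pr nd
    by (metis prime_dvd_mult_iff prime_dvd_power)
  show "\<exists>x y :: int. [x^4 + 6*x^2 - 3 = 0] (mod int p) \<and> [y^2 = x^3 - x] (mod int p)"
    using X Y by (intro exI[of _ x] exI[of _ y]) (simp add: cong_0_iff cong_iff_dvd_diff dvd_diff_commute)
qed

end
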